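(* Let $h$ be an admissible perturbation and $\alpha\in(0,1)$. There exists $l>0$ (depending only on $h$ and the network) such that for every $\eta>0$ there is $t_0\ge0$ with the following property: for every admissible initial condition, the solution of the dynamics with rate $\eta$ satisfies $$\tilde\nabla_\pi W(\rho(t),\pi(t))'\big(F^h(f(t))-\pi(t)\big)\le\frac{2l}{1-\alpha}\qquad\forall t\ge t_0.$$
   Context: Network: $\mathcal G=(\mathcal V,\mathcal E)$ is a finite directed graph with $\mathcal V=\{0,1,\dots,n\}$, containing no directed cycle, in which node $0$ is the unique node with no incoming link, node $n$ is the unique node with no outgoing link, there is a directed path from every node to $n$, and every link $(u,v)\in\mathcal E$ satisfies $u<v$. For $v\in\mathcal V$, $\mathcal E_v^-$ and $\mathcal E_v^+$ are the sets of links entering and leaving $v$. Each link $e$ has a flow-density function $\mu_e:[0,\infty)\to[0,\infty)$ that is continuously differentiable, strictly increasing, strictly concave, with $\mu_e(0)=0$ and $\mu_e'(0)<\infty$; its capacity is $C_e:=\lim_{\rho\to\infty}\mu_e(\rho)\in(0,+\infty]$. Put $\mathcal F_v:=\prod_{e\in\mathcal E_v^+}[0,C_e)$, $\mathcal F:=\prod_{e\in\mathcal E}[0,C_e)$, and $\mu(\rho):=(\mu_e(\rho_e))_{e\in\mathcal E}$. The delay is $T_e(f_e)=\mu_e^{-1}(f_e)/f_e$ for $0<f_e<C_e$, $T_e(0)=1/\mu_e'(0)$, $T_e(f_e)=+\infty$ for $f_e\ge C_e$; $T(f):=(T_e(f_e))_e$. $\mathcal P$ is the set of directed paths from $0$ to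 $n$, $A\in\{0,1\}^{\mathcal E\times\mathcal P}$ the link-path incidence matrix ($A_{ep}=1$ iff $e\in p$), $\mathcal S(\mathcal P)=\{\pi\in\mathbb R_+^{\mathcal P}:\sum_p\pi_p=1\}$, $\Pi:=\{\pi\in\mathcal S(\mathcal P):(A\pi)_e<C_e\ \forall e\}$, and $f^\pi:=A\pi$. The min-cut capacity $C^*:=\min\{\sum_{(u,v)\in\mathcal E:u\in\mathcal U,v\notin\mathcal U}C_{(u,v)}:\mathcal U\subseteq\mathcal V,0\in\mathcal U,n\notin\mathcal U\}$ is assumed to satisfy $C^*>1$. Perturbation: $\Phi:=I-|\mathcal P|^{-1}\mathbf 1\mathbf 1'$; interiors $\mathrm{int}$ and boundaries $\partial$ of subsets of $\mathcal S(\mathcal P)$ are relative to the hyperplane $\{x:\mathbf 1'x=1\}$. An admissible perturbation is a function $h:\Pi_h\to\mathbb R$, where $\Pi_h\subseteq\Pi$ is closed in $\mathbb R^{\mathcal P}$, convex, with nonempty interior, $h$ is strictly convex, twice differentiable on $\mathrm{int}(\Pi_h)$, and $\|\tilde\nabla h(\pi)\|\to+\infty$ as $\pi\to\partial\Pi_h$, where $\tilde\nabla h:=\Phi\nabla h$. Its perturbed best response is $F^h(f):=\arg\min_{\omega\in\Pi_h}\{\omega'A'T(f)+h(\omega)\}$ for $f\in\mathcal F$. Local decisions: for each $v\in\{0,\dots,n-1\}$ a continuously differentiable $G^v:\mathcal F_v\times\Pi\to\mathcal S(\mathcal E_v^+)$ is given such that (consistency) $(\sum_{j\in\mathcal E_v^+}f^\pi_j)\,G^v_e(f^\pi_{\mathcal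 E_v^+},\pi)=f^\pi_e$ for all $\pi\in\Pi$, $e\in\mathcal E_v^+$; and (cooperativity) $\partial G^v_j(f_{\mathcal E_v^+},\pi)/\partial f_e\ge0$ for all $\pi\in\Pi$, $f_{\mathcal E_v^+}\in\mathcal F_v$, $j\neq e\in\mathcal E_v^+$. For $f\in\mathcal F$, $\pi\in\Pi$, $e\in\mathcal E_v^+$: $H_e(f,\pi):=G^v_e(f_{\mathcal E_v^+},\pi)-f_e$ if $v=0$, and $H_e(f,\pi):=(\sum_{j\in\mathcal E_v^-}f_j)G^v_e(f_{\mathcal E_v^+},\pi)-f_e$ if $1\le v<n$. Dynamics: for $\eta>0$, $\dot\pi=\eta(F^h(f)-\pi)$, $\dot\rho=H(f,\pi)$, $f=\mu(\rho)$. An admissible initial condition is $\pi(0)\in\Pi$ with all entries positive and $\rho(0)\in(0,\infty)^{\mathcal E}$; $(\pi(t),\rho(t))_{t\ge0}$ denotes the (unique, global) solution, $f(t):=\mu(\rho(t))$, $f^\pi(t):=A\pi(t)$. Lyapunov notation: for $\pi\in\Pi$, $\rho^\pi_e:=\mu_e^{-1}(f^\pi_e)$; $\sigma_e:=\mathrm{sgn}(\rho_e-\rho^\pi_e)$ with $\mathrm{sgn}(0)=0$; $W(\rho,\pi):=\sum_{v=0}^{n-1}\alpha^v\sum_{e\in\mathcal E_v^+}|\rho_e-\rho^\pi_e|$. Its gradient in $\pi$ is taken with the convention $\frac{d}{dx}|x|=\mathrm{sgn}(x)$ for all $x$, i.e. $\partial W(\rho,\pi)/\partial\pi_p:=-\sum_{v=0}^{n-1}\alpha^v\sum_{e\in\mathcal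 E_v^+}\sigma_e A_{ep}/\mu_e'(\rho^\pi_e)$, and $\tilde\nabla_\pi W:=\Phi\nabla_\pi W$. *)

theory Defs
  imports "HOL-Analysis.Analysis"
begin

text \<open>Links are the elements of a finite type 'e; link e goes from node src e to node dst e.
  Nodes are 0..n. Paths from 0 to n are indexed by a finite type 'p via a bijection pth.\<close>

definition network :: "('e::finite \<Rightarrow> nat) \<Rightarrow> ('e \<Rightarrow> nat) \<Rightarrow> nat \<Rightarrow> bool" where
  "network src dst n \<longleftrightarrow>
     inj (\<lambda>e. (src e, dst e)) \<and>
     (\<forall>e. src e < dst e \<and> dst e \<le> n) \<and>
     (\<forall>v\<in>{1..n}. \<exists>e. dst e = v) \<and>
     (\<forall>v<n. \<exists>e. src e = v) \<and>
     (\<forall>v\<le>n. (v, n) \<in> {(src e, dst e) | e. True}\<^sup>*)"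

definition is_path :: "('e \<Rightarrow> nat) \<Rightarrow> ('e \<Rightarrow> nat) \<Rightarrow> nat \<Rightarrow> 'e list \<Rightarrow> bool" where
  "is_path src dst n es \<longleftrightarrow> es \<noteq> [] \<and> src (hd es) = 0 \<and> dst (last es) = n \<and>
     (\<forall>i. Suc i < length es \<longrightarrow> dst (es ! i) = src (es ! Suc i))"

definition path_indexing :: "('e \<Rightarrow> nat) \<Rightarrow> ('e \<Rightarrow> nat) \<Rightarrow> nat \<Rightarrow> ('p::finite \<Rightarrow> 'e list) \<Rightarrow> bool" where
  "path_indexing src dst n pth \<longleftrightarrow> bij_betw pth UNIV {es. is_path src dst n es}"

definition Amat :: "('p \<Rightarrow> 'e list) \<Rightarrow> 'e \<Rightarrow> 'p \<Rightarrow> real" where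
  "Amat pth e p = (if e \<in> set (pth p) then 1 else 0)"

definition fpi :: "('p::finite \<Rightarrow> 'e list) \<Rightarrow> real^'p \<Rightarrow> real^'e" where
  "fpi pth \<pi> = (\<chi> e. \<Sum>p\<in>UNIV. Amat pth e p * \<pi> $ p)"

definition strictly_convex_on :: "'a::real_vector set \<Rightarrow> ('a \<Rightarrow> real) \<Rightarrow> bool" where
  "strictly_convex_on S f \<longleftrightarrow> convex S \<and>
     (\<forall>x\<in>S. \<forall>y\<in>S. x \<noteq> y \<longrightarrow> (\<forall>t. 0 < t \<and> t < 1 \<longrightarrow>
        f ((1 - t) *\<^sub>R x + t *\<^sub>R y) < (1 - t) * f x + t * f y))"

definition flow_density :: "('e \<Rightarrow> real \<Rightarrow> real) \<Rightarrow> ('e \<Rightarrow> real \<Rightarrow> real) \<Rightarrow> bool" where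
  "flow_density mu dmu \<longleftrightarrow> (\<forall>e.
     (\<forall>r\<ge>0. (mu e has_real_derivative dmu e r) (at r within {0..})) \<and>
     continuous_on {0..} (dmu e) \<and>
     strict_mono_on {0..} (mu e) \<and>
     strictly_convex_on {0..} (\<lambda>r. - mu e r) \<and>
     mu e 0 = 0)"

definition capacity :: "('e \<Rightarrow> real \<Rightarrow> real) \<Rightarrow> 'e \<Rightarrow> ereal" where
  "capacity mu e = Lim at_top (\<lambda>r. ereal (mu e r))"

definition mu_inv :: "('e \<Rightarrow> real \<Rightarrow> real) \<Rightarrow> 'e \<Rightarrow> real \<Rightarrow> real" where
  "mu_inv mu e y = (THE r. 0 \<le> r \<and> mu e r = y)"

definition mu_vec :: "('e \<Rightarrow> real \<Rightarrow> real) \<Rightarrow> real^'e \<Rightarrow> real^'e" where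
  "mu_vec mu \<rho> = (\<chi> e. mu e (\<rho> $ e))"

text \<open>Delay, for 0 \<le> x < C_e (the only arguments at which it is used).\<close>
definition delay :: "('e \<Rightarrow> real \<Rightarrow> real) \<Rightarrow> ('e \<Rightarrow> real \<Rightarrow> real) \<Rightarrow> 'e \<Rightarrow> real \<Rightarrow> real" where
  "delay mu dmu e x = (if x = 0 then 1 / dmu e 0 else mu_inv mu e x / x)"

definition Fset :: "('e::finite \<Rightarrow> real \<Rightarrow> real) \<Rightarrow> (real^'e) set" where
  "Fset mu = {f. \<forall>e. 0 \<le> f $ e \<and> ereal (f $ e) < capacity mu e}"

text \<open>F_v, embedded in R^E: only the coordinates of links leaving v are constrained.\<close>
definition Fv :: "('e::finite \<Rightarrow> real \<Rightarrow> real) \<Rightarrow> ('e \<Rightarrow> nat) \<Rightarrow> nat \<Rightarrow> (real^'e) set" where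
  "Fv mu src v = {f. \<forall>e. src e = v \<longrightarrow> 0 \<le> f $ e \<and> ereal (f $ e) < capacity mu e}"

definition simplexP :: "(real^'p::finite) set" where
  "simplexP = {\<pi>. (\<forall>p. 0 \<le> \<pi> $ p) \<and> (\<Sum>p\<in>UNIV. \<pi> $ p) = 1}"

definition PiSet :: "('e::finite \<Rightarrow> real \<Rightarrow> real) \<Rightarrow> ('p::finite \<Rightarrow> 'e list) \<Rightarrow> (real^'p) set" where
  "PiSet mu pth = {\<pi> \<in> simplexP. \<forall>e. ereal (fpi pth \<pi> $ e) < capacity mu e}"

definition hyperP :: "(real^'p::finite) set" where
  "hyperP = {x. (\<Sum>p\<in>UNIV. x $ p) = 1}"

definition int_H :: "(real^'p::finite) set \<Rightarrow> (real^'p) set" where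
  "int_H S = {x \<in> S. \<exists>\<epsilon>>0. \<forall>y\<in>hyperP. dist y x < \<epsilon> \<longrightarrow> y \<in> S}"

definition bdry_H :: "(real^'p::finite) set \<Rightarrow> (real^'p) set" where
  "bdry_H S = closure S - int_H S"

definition Phi :: "real^'p::finite \<Rightarrow> real^'p" where
  "Phi x = x - (\<chi> i. (\<Sum>j\<in>UNIV. x $ j) / real CARD('p))"

definition admissible_perturbation ::
  "('e::finite \<Rightarrow> real \<Rightarrow> real) \<Rightarrow> ('p::finite \<Rightarrow> 'e list) \<Rightarrow> (real^'p) set \<Rightarrow> (real^'p \<Rightarrow> real) \<Rightarrow> bool" where
  "admissible_perturbation mu pth Pih h \<longleftrightarrow>
     Pih \<subseteq> PiSet mu pth \<and> closed Pih \<and> convex Pih \<and> int_H Pih \<noteq> {} \<and>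
     strictly_convex_on Pih h \<and>
     (\<exists>gh Hh. (\<forall>x\<in>int_H Pih.
          (h has_derivative (\<lambda>d. gh x \<bullet> d)) (at x within Pih) \<and>
          (gh has_derivative Hh x) (at x within Pih)) \<and>
        (\<forall>b\<in>bdry_H Pih. filterlim (\<lambda>x. norm (Phi (gh x))) at_top (at b within int_H Pih)))"

definition best_response ::
  "('e::finite \<Rightarrow> real \<Rightarrow> real) \<Rightarrow> ('e \<Rightarrow> real \<Rightarrow> real) \<Rightarrow> ('p::finite \<Rightarrow> 'e list) \<Rightarrow>
   (real^'p) set \<Rightarrow> (real^'p \<Rightarrow> real) \<Rightarrow> real^'e \<Rightarrow> real^'p" where
  "best_response mu dmu pth Pih h f =
     (let obj = (\<lambda>\<omega>. (\<Sum>p\<in>UNIV. \<omega> $ p * (\<Sum>e\<in>UNIV. Amat pth e p * delay mu dmu e (f $ e))) + h \<omega>)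
      in (THE \<omega>. \<omega> \<in> Pih \<and> (\<forall>\<omega>'\<in>Pih. obj \<omega> \<le> obj \<omega>')))"

text \<open>G v f pi is an element of R^E supported on the links leaving v (i.e. an element of
  S(E_v^+) embedded by zeros); it depends only on the coordinates of f on links leaving v.\<close>
definition local_decisions ::
  "('e::finite \<Rightarrow> real \<Rightarrow> real) \<Rightarrow> ('p::finite \<Rightarrow> 'e list) \<Rightarrow> ('e \<Rightarrow> nat) \<Rightarrow> nat \<Rightarrow>
   (nat \<Rightarrow> real^'e \<Rightarrow> real^'p \<Rightarrow> real^'e) \<Rightarrow> bool" where
  "local_decisions mu pth src n G \<longleftrightarrow> (\<forall>v<n.
     (\<forall>f \<pi>. (\<forall>e. 0 \<le> G v f \<pi> $ e) \<and> (\<forall>e. src e \<noteq> v \<longrightarrow> G v f \<pi> $ e = 0) \<and>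
            (\<Sum>e\<in>{e. src e = v}. G v f \<pi> $ e) = 1) \<and>
     (\<forall>f f' \<pi>. (\<forall>e. src e = v \<longrightarrow> f $ e = f' $ e) \<longrightarrow> G v f \<pi> = G v f' \<pi>) \<and>
     (\<exists>G' :: (real^'e) \<times> (real^'p) \<Rightarrow> ((real^'e) \<times> (real^'p)) \<Rightarrow>\<^sub>L (real^'e).
        (\<forall>x\<in>Fv mu src v \<times> PiSet mu pth.
           ((\<lambda>y. G v (fst y) (snd y)) has_derivative blinfun_apply (G' x)) (at x within Fv mu src v \<times> PiSet mu pth)) \<and>
        continuous_on (Fv mu src v \<times> PiSet mu pth) G' \<and>
        (\<forall>\<pi>\<in>PiSet mu pth. \<forall>f\<in>Fv mu src v. \<forall>j e. src j = v \<longrightarrow> src e = v \<longrightarrow> j \<noteq> e \<longrightarrow>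
           0 \<le> blinfun_apply (G' (f, \<pi>)) (axis e 1, 0) $ j)) \<and>
     (\<forall>\<pi>\<in>PiSet mu pth. \<forall>e. src e = v \<longrightarrow>
        (\<Sum>j\<in>{j. src j = v}. fpi pth \<pi> $ j) * G v (fpi pth \<pi>) \<pi> $ e = fpi pth \<pi> $ e))"

definition Hfun ::
  "('e::finite \<Rightarrow> nat) \<Rightarrow> ('e \<Rightarrow> nat) \<Rightarrow> (nat \<Rightarrow> real^'e \<Rightarrow> real^'p \<Rightarrow> real^'e) \<Rightarrow> real^'e \<Rightarrow> real^'p \<Rightarrow> real^'e" where
  "Hfun src dst G f \<pi> = (\<chi> e.
     (if src e = 0 then G (src e) f \<pi> $ e
      else (\<Sum>j\<in>{j. dst j = src e}. f $ j) * G (src e) f \<pi> $ e) - f $ e)"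

definition is_solution ::
  "('e::finite \<Rightarrow> real \<Rightarrow> real) \<Rightarrow> ('e \<Rightarrow> real \<Rightarrow> real) \<Rightarrow> ('p::finite \<Rightarrow> 'e list) \<Rightarrow>
   ('e \<Rightarrow> nat) \<Rightarrow> ('e \<Rightarrow> nat) \<Rightarrow> (nat \<Rightarrow> real^'e \<Rightarrow> real^'p \<Rightarrow> real^'e) \<Rightarrow>
   (real^'p) set \<Rightarrow> (real^'p \<Rightarrow> real) \<Rightarrow> real \<Rightarrow> (real \<Rightarrow> real^'p) \<Rightarrow> (real \<Rightarrow> real^'e) \<Rightarrow> bool" where
  "is_solution mu dmu pth src dst G Pih h \<eta> \<pi> \<rho> \<longleftrightarrow> (\<forall>t\<ge>0.
     \<pi> t \<in> PiSet mu pth \<and> (\<forall>e. 0 \<le> \<rho> t $ e) \<and> mu_vec mu (\<rho> t) \<in> Fset mu \<and>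
     (\<pi> has_vector_derivative
        \<eta> *\<^sub>R (best_response mu dmu pth Pih h (mu_vec mu (\<rho> t)) - \<pi> t)) (at t within {0..}) \<and>
     (\<rho> has_vector_derivative Hfun src dst G (mu_vec mu (\<rho> t)) (\<pi> t)) (at t within {0..}))"

definition admissible_init :: "('e::finite \<Rightarrow> real \<Rightarrow> real) \<Rightarrow> ('p::finite \<Rightarrow> 'e list) \<Rightarrow> real^'p \<Rightarrow> real^'e \<Rightarrow> bool" where
  "admissible_init mu pth \<pi>0 \<rho>0 \<longleftrightarrow> \<pi>0 \<in> PiSet mu pth \<and> (\<forall>p. 0 < \<pi>0 $ p) \<and> (\<forall>e. 0 < \<rho>0 $ e)"

definition rho_pi :: "('e::finite \<Rightarrow> real \<Rightarrow> real) \<Rightarrow> ('p::finite \<Rightarrow> 'e list) \<Rightarrow> real^'p \<Rightarrow> 'e \<Rightarrow> real" where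
  "rho_pi mu pth \<pi> e = mu_inv mu e (fpi pth \<pi> $ e)"

definition gradW ::
  "('e::finite \<Rightarrow> real \<Rightarrow> real) \<Rightarrow> ('e \<Rightarrow> real \<Rightarrow> real) \<Rightarrow> ('p::finite \<Rightarrow> 'e list) \<Rightarrow> ('e \<Rightarrow> nat) \<Rightarrow> nat \<Rightarrow>
   real \<Rightarrow> real^'e \<Rightarrow> real^'p \<Rightarrow> real^'p" where
  "gradW mu dmu pth src n \<alpha> \<rho> \<pi> = (\<chi> p.
     - (\<Sum>v<n. \<alpha> ^ v * (\<Sum>e\<in>{e. src e = v}.
          sgn (\<rho> $ e - rho_pi mu pth \<pi> e) * Amat pth e p / dmu e (rho_pi mu pth \<pi> e))))"

definition min_cut_gt_one :: "('e::finite \<Rightarrow> real \<Rightarrow> real) \<Rightarrow> ('e \<Rightarrow> nat) \<Rightarrow> ('e \<Rightarrow> nat) \<Rightarrow> nat \<Rightarrow> bool" where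
  "min_cut_gt_one mu src dst n \<longleftrightarrow> (\<forall>U \<subseteq> {0..n}. 0 \<in> U \<longrightarrow> n \<notin> U \<longrightarrow>
     (\<Sum>e\<in>{e. src e \<in> U \<and> dst e \<notin> U}. capacity mu e) > 1)"

end

theory Submission
  imports Defs
begin


lemma strict_imp_convex_on:
  assumes s: "strictly_convex_on S f" shows "convex_on S f"
proof (rule convex_onI)
  show "convex S" using s unfolding strictly_convex_on_def by blast
  fix t :: real and x y assume t: "0 < t" "t < 1" and xy: "x \<in> S" "y \<in> S"
  show "f ((1 - t) *\<^sub>R x + t *\<^sub>R y) \<le> (1 - t) * f x + t * f y"
  proof (cases "x = y")
    case True
    have "(1 - t) *\<^sub>R x + t *\<^sub>R x = x" by (simp add: scaleR_add_left[symmetric])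
    moreover have "(1 - t) * f x + t * f x = f x" by (simp add: algebra_simps)
    ultimately show ?thesis using True by simp
  next
    case False
    then show ?thesis using s t xy unfolding strictly_convex_on_def by (meson less_imp_le)
  qed
qed

lemma tangent_ineq:
  fixes g :: "'a::real_normed_vector \<Rightarrow> real"
  assumes conv: "convex_on S g" and u: "u \<in> S" and x: "x \<in> S"
    and der: "(g has_derivative g') (at u within S)"
  shows "g u + g' (x - u) \<le> g x"
proof -
  have lin: "linear g'" using der has_derivative_linear by blast
  define l where "l = (\<lambda>t::real. u + t *\<^sub>R (x - u))"
  have lS: "l ` {0..1} \<subseteq> S"
  proof
    fix y assume "y \<in> l ` {0..1}"
    then obtain t where t: "t \<in> {0..1}" "y = l t" by auto
    have "y = (1 - t) *\<^sub>R u + t *\<^sub>R x" using t by (simp add: l_def algebra_simps)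
    then show "y \<in> S" using conv u x t unfolding convex_on_def convex_alt by auto
  qed
  have dl: "(l has_derivative (\<lambda>t. t *\<^sub>R (x - u))) (at 0 within {0..1})"
    unfolding l_def by (auto intro!: derivative_eq_intros)
  have l0: "l 0 = u" by (simp add: l_def)
  have dc: "((g \<circ> l) has_derivative (g' \<circ> (\<lambda>t. t *\<^sub>R (x - u)))) (at 0 within {0..1})"
    using diff_chain_within[OF dl] der l0 lS by (metis has_derivative_subset)
  have "(\<lambda>t. g' (t *\<^sub>R (x - u))) = (*) (g' (x - u))"
    using lin by (auto simp: linear_scale)
  with dc have "((g \<circ> l) has_field_derivative g' (x - u)) (at 0 within {0..1})"
    by (simp add: has_field_derivative_def o_def)
  then have lim: "((\<lambda>t. ((g \<circ> l) t - (g \<circ> l) 0) / (t - 0)) \<longlongrightarrow> g' (x - u)) (at 0 within {0<..1})"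
    unfolding has_field_derivative_iff by (rule tendsto_within_subset) auto
  have nb: "at (0::real) within {0<..1} \<noteq> bot"
    by (simp add: at_within_eq_bot_iff)
  have ev: "eventually (\<lambda>t. ((g \<circ> l) t - (g \<circ> l) 0) / (t - 0) \<le> g x - g u) (at 0 within {0<..1})"
    unfolding eventually_at_filter
  proof (rule always_eventually, intro allI impI)
    fix t :: real assume t: "t \<noteq> 0" "t \<in> {0<..1}"
    have "l t = (1 - t) *\<^sub>R u + t *\<^sub>R x" by (simp add: l_def algebra_simps)
    then have "g (l t) \<le> (1 - t) * g u + t * g x" using convex_onD[OF conv, of t u x] u x t by simp
    then have "g (l t) - g u \<le> t * (g x - g u)" by (simp add: algebra_simps)
    then show "((g \<circ> l) t - (g \<circ> l) 0) / (t - 0) \<le> g x - g u"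
      using t l0 by (simp add: divide_le_eq o_def mult.commute[of t])
  qed
  have "g' (x - u) \<le> g x - g u"
    using tendsto_upperbound[OF lim ev nb] .
  then show ?thesis by simp
qed


lemma Phi_add: "Phi (a + b) = Phi a + Phi (b::real^'p::finite)"
  unfolding Phi_def by (simp add: vec_eq_iff sum.distrib add_divide_distrib)

lemma Phi_comp: "Phi (x::real^'p::finite) $ p = x $ p - (\<Sum>j\<in>UNIV. x $ j) / real CARD('p)"
  unfolding Phi_def by simp

lemma Phi_sum: "(\<Sum>p\<in>UNIV. Phi (x::real^'p::finite) $ p) = 0"
proof -
  have "(\<Sum>p\<in>UNIV. Phi x $ p) = (\<Sum>p\<in>UNIV. x $ p) - real CARD('p) * ((\<Sum>j\<in>UNIV. x $ j) / real CARD('p))"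
    by (simp add: Phi_comp sum_subtractf)
  then show ?thesis by simp
qed

lemma inner_Phi_zero_sum:
  assumes "(\<Sum>p\<in>UNIV. d $ p) = 0"
  shows "Phi g \<bullet> d = g \<bullet> (d::real^'p::finite)"
proof -
  have "Phi g \<bullet> d = (\<Sum>p\<in>UNIV. (g $ p - (\<Sum>j\<in>UNIV. g $ j) / real CARD('p)) * d $ p)"
    by (simp add: inner_vec_def Phi_comp)
  also have "\<dots> = (\<Sum>p\<in>UNIV. g $ p * d $ p) - (\<Sum>p\<in>UNIV. (\<Sum>j\<in>UNIV. g $ j) / real CARD('p) * d $ p)"
    by (simp add: left_diff_distrib sum_subtractf)
  also have "(\<Sum>p\<in>UNIV. (\<Sum>j\<in>UNIV. g $ j) / real CARD('p) * d $ p) = (\<Sum>j\<in>UNIV. g $ j) / real CARD('p) * (\<Sum>p\<in>UNIV. d $ p)"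
    by (simp add: sum_distrib_left)
  finally show ?thesis using assms by (simp add: inner_vec_def)
qed

lemma inner_Phi_self: "g \<bullet> Phi g = (norm (Phi (g::real^'p::finite)))\<^sup>2"
proof -
  have "(norm (Phi g))\<^sup>2 = Phi g \<bullet> Phi g" by (simp add: power2_norm_eq_inner)
  also have "\<dots> = g \<bullet> Phi g" by (simp add: inner_Phi_zero_sum Phi_sum inner_commute)
  finally show ?thesis by simp
qed

lemma small_le:
  fixes a b K :: real
  assumes "\<And>\<mu>. 0 < \<mu> \<Longrightarrow> \<mu> < 1 \<Longrightarrow> a \<le> b + \<mu> * K"
  shows "a \<le> b"
proof (rule ccontr)
  assume "\<not> a \<le> b"
  define \<mu> where "\<mu> = min (1/2) ((a - b) / (2 * (\<bar>K\<bar> + 1)))"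
  have pos: "0 < \<mu>" "\<mu> < 1" using \<open>\<not> a \<le> b\<close> by (auto simp: \<mu>_def)
  have "\<mu> * K \<le> \<mu> * \<bar>K\<bar>" using pos by (simp add: mult_left_mono)
  also have "\<dots> \<le> \<mu> * (\<bar>K\<bar> + 1)" using pos by (simp add: mult_left_mono)
  also have "\<dots> \<le> (a - b) / (2 * (\<bar>K\<bar> + 1)) * (\<bar>K\<bar> + 1)"
    by (rule mult_right_mono) (auto simp: \<mu>_def)
  also have "\<dots> = (a - b) / 2" by (simp add: field_simps)
  also have "\<dots> < a - b" using \<open>\<not> a \<le> b\<close> by (auto simp: field_simps)
  finally have "\<mu> * K < a - b" .
  moreover have "a \<le> b + \<mu> * K" using assms pos by blast
  ultimately show False using \<open>\<not> a \<le> b\<close> by linarith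
qed



lemma simplex_sum: "x \<in> simplexP \<Longrightarrow> (\<Sum>p\<in>UNIV. x $ p) = 1"
  by (simp add: simplexP_def)

lemma simplex_norm: "x \<in> simplexP \<Longrightarrow> norm (x::real^'p::finite) \<le> 1"
proof -
  assume x: "x \<in> simplexP"
  have "norm x \<le> (\<Sum>i\<in>UNIV. \<bar>x $ i\<bar>)" by (rule norm_le_l1_cart)
  also have "\<dots> = (\<Sum>i\<in>UNIV. x $ i)" using x by (simp add: simplexP_def)
  finally show ?thesis using x by (simp add: simplexP_def)
qed

lemma sum_vec_add: "(\<Sum>p\<in>UNIV. (a + b) $ p) = (\<Sum>p\<in>UNIV. a $ p) + (\<Sum>p\<in>UNIV. (b::real^'p::finite) $ p)"
  by (simp add: sum.distrib)
lemma sum_vec_diff: "(\<Sum>p\<in>UNIV. (a - b) $ p) = (\<Sum>p\<in>UNIV. a $ p) - (\<Sum>p\<in>UNIV. (b::real^'p::finite) $ p)"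
  by (simp add: sum_subtractf)
lemma sum_vec_scale: "(\<Sum>p\<in>UNIV. (c *\<^sub>R a) $ p) = c * (\<Sum>p\<in>UNIV. (a::real^'p::finite) $ p)"
  by (simp add: sum_distrib_left)

lemma int_H_comb:
  fixes P :: "(real^'p::finite) set"
  assumes P: "P \<subseteq> hyperP" "convex P" and r0: "r0 > 0" "\<forall>y\<in>hyperP. dist y x0 < r0 \<longrightarrow> y \<in> P"
    and x0: "x0 \<in> P" and y: "y \<in> P" and mu: "0 < \<mu>" "\<mu> \<le> 1"
  shows "(1 - \<mu>) *\<^sub>R y + \<mu> *\<^sub>R x0 \<in> int_H P"
proof -
  define u where "u = (1 - \<mu>) *\<^sub>R y + \<mu> *\<^sub>R x0"
  have uP: "u \<in> P" unfolding u_def using convexD_alt[OF P(2) y x0, of \<mu>] mu by simp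
  have sy: "(\<Sum>p\<in>UNIV. y $ p) = 1" and sx: "(\<Sum>p\<in>UNIV. x0 $ p) = 1"
    using P y x0 by (auto simp: hyperP_def)
  have su: "(\<Sum>p\<in>UNIV. u $ p) = 1"
    unfolding u_def sum_vec_add sum_vec_scale sy sx by simp
  have "\<forall>z\<in>hyperP. dist z u < \<mu> * r0 \<longrightarrow> z \<in> P"
  proof (intro ballI impI)
    fix z assume z: "z \<in> hyperP" "dist z u < \<mu> * r0"
    define w where "w = x0 + (1 / \<mu>) *\<^sub>R (z - u)"
    have sz: "(\<Sum>p\<in>UNIV. z $ p) = 1" using z by (simp add: hyperP_def)
    have "(\<Sum>p\<in>UNIV. w $ p) = 1"
      unfolding w_def sum_vec_add sum_vec_scale sum_vec_diff sz su sx by simp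
    then have wH: "w \<in> hyperP" by (simp add: hyperP_def)
    have "dist w x0 = norm (z - u) / \<mu>" unfolding w_def dist_norm using mu by simp
    also have "\<dots> < r0" using z mu by (simp add: dist_norm divide_less_eq mult.commute)
    finally have wP: "w \<in> P" using r0 wH by blast
    have "z = (1 - \<mu>) *\<^sub>R y + \<mu> *\<^sub>R w"
      unfolding w_def using mu by (simp add: u_def algebra_simps)
    then show "z \<in> P" using convexD_alt[OF P(2) y wP, of \<mu>] mu by simp
  qed
  then show ?thesis using uP mu r0 unfolding int_H_def u_def[symmetric]
    by (intro CollectI conjI) (auto intro!: exI[of _ "\<mu> * r0"])
qed



lemma minimizer_exists:
  fixes P :: "(real^'p::finite) set" and h :: "real^'p \<Rightarrow> real" and cv :: "real^'p"
    and gh :: "real^'p \<Rightarrow> real^'p"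
  assumes P_sub: "P \<subseteq> simplexP" and cl: "closed P" and cvx: "convex P"
    and x0: "x0 \<in> int_H P"
    and hc: "convex_on P h"
    and hd: "\<And>x. x \<in> int_H P \<Longrightarrow> (h has_derivative (\<lambda>d. gh x \<bullet> d)) (at x within P)"
    and hb: "\<And>b. b \<in> bdry_H P \<Longrightarrow> filterlim (\<lambda>x. norm (Phi (gh x))) at_top (at b within int_H P)"
  shows "\<exists>\<omega>\<in>P. \<forall>\<omega>'\<in>P. cv \<bullet> \<omega> + h \<omega> \<le> cv \<bullet> \<omega>' + h \<omega>'"
proof -
  define F where "F = (\<lambda>\<omega>. cv \<bullet> \<omega> + h \<omega>)"
  define g where "g = (\<lambda>x. cv + gh x)"
  have intP: "int_H P \<subseteq> P" by (auto simp: int_H_def)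
  have PH: "P \<subseteq> hyperP" using P_sub by (auto simp: simplexP_def hyperP_def)
  have x0P: "x0 \<in> P" using x0 intP by blast
  have lin_conv: "convex_on P (\<lambda>\<omega>. cv \<bullet> \<omega>)"
    by (rule convex_onI[OF _ cvx]) (simp add: inner_add_right)
  have Fc: "convex_on P F" unfolding F_def using convex_on_add[OF lin_conv hc] .
  have Fd: "(F has_derivative (\<lambda>d. g x \<bullet> d)) (at x within P)" if "x \<in> int_H P" for x
  proof -
    have "((\<lambda>\<omega>. cv \<bullet> \<omega> + h \<omega>) has_derivative (\<lambda>d. cv \<bullet> d + gh x \<bullet> d)) (at x within P)"
      by (intro has_derivative_add has_derivative_inner_right hd that) (rule has_derivative_ident)
    then show ?thesis unfolding F_def g_def by (simp add: inner_add_left)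
  qed
  have tang: "F u + g u \<bullet> (x - u) \<le> F x" if "u \<in> int_H P" "x \<in> P" for u x
    using tangent_ineq[OF Fc _ that(2) Fd[OF that(1)]] that intP by blast
  have Fcont: "continuous (at u within P) F" if "u \<in> int_H P" for u
    using has_derivative_continuous[OF Fd[OF that]] .
  obtain r0 where r0: "r0 > 0" "\<forall>y\<in>hyperP. dist y x0 < r0 \<longrightarrow> y \<in> P"
    using x0 unfolding int_H_def by blast
  have normP: "norm x \<le> 1" if "x \<in> P" for x using that P_sub simplex_norm by blast
  have lb: "F x0 - norm (g x0) * 2 \<le> F x" if "x \<in> P" for x
  proof -
    have "norm (x - x0) \<le> 2" using normP[OF that] normP[OF x0P] norm_triangle_ineq4[of x x0] by linarith
    then have "norm (g x0) * norm (x - x0) \<le> norm (g x0) * 2" by (simp add: mult_left_mono)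
    moreover have "- (norm (g x0) * norm (x - x0)) \<le> g x0 \<bullet> (x - x0)"
      using Cauchy_Schwarz_ineq2[of "g x0" "x - x0"] by linarith
    ultimately show ?thesis using tang[OF x0 that] by linarith
  qed
  define m where "m = Inf (F ` P)"
  have bdd: "bdd_below (F ` P)" using lb by (auto intro!: bdd_belowI)
  have mle: "m \<le> F x" if "x \<in> P" for x unfolding m_def using bdd that by (simp add: cInf_lower)
  have "\<forall>k. \<exists>x. x \<in> P \<and> F x < m + inverse (real (Suc k))"
  proof
    fix k
    have "Inf (F ` P) < m + inverse (real (Suc k))" unfolding m_def by simp
    then obtain z where "z \<in> F ` P" "z < m + inverse (real (Suc k))"
      using cInf_lessD[of "F ` P"] x0P by blast
    then show "\<exists>x. x \<in> P \<and> F x < m + inverse (real (Suc k))" by blast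
  qed
  then obtain xs where xs: "\<And>k. xs k \<in> P" "\<And>k. F (xs k) < m + inverse (real (Suc k))" by metis
  have bP: "bounded P" using normP by (auto simp: bounded_iff)
  have cP: "compact P" using bP cl by (simp add: compact_eq_bounded_closed)
  obtain y r where y: "y \<in> P" and r: "strict_mono r" and lim: "(xs \<circ> r) \<longlonglongrightarrow> y"
    using seq_compactE[OF compact_imp_seq_compact[OF cP], of xs] xs(1) by blast
  have Flim: "(\<lambda>k. F (xs (r k))) \<longlonglongrightarrow> m"
  proof (rule tendsto_sandwich[where f="\<lambda>k. m" and h="\<lambda>k. m + inverse (real (Suc k))"])
    show "\<forall>\<^sub>F k in sequentially. m \<le> F (xs (r k))" using mle xs(1) by simp
    show "\<forall>\<^sub>F k in sequentially. F (xs (r k)) \<le> m + inverse (real (Suc k))"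
    proof (rule always_eventually, rule allI)
      fix k
      have "k \<le> r k" using seq_suble[OF r] .
      then have "inverse (real (Suc (r k))) \<le> inverse (real (Suc k))"
        by (simp add: le_imp_inverse_le)
      then show "F (xs (r k)) \<le> m + inverse (real (Suc k))" using xs(2)[of "r k"] by linarith
    qed
    show "(\<lambda>k. m) \<longlonglongrightarrow> m" by simp
    show "(\<lambda>k. m + inverse (real (Suc k))) \<longlonglongrightarrow> m"
      using tendsto_add[OF tendsto_const LIMSEQ_inverse_real_of_nat, of m] by simp
  qed
  define uu where "uu = (\<lambda>\<mu>. (1 - \<mu>) *\<^sub>R y + \<mu> *\<^sub>R x0)"
  have uint: "uu \<mu> \<in> int_H P" if "0 < \<mu>" "\<mu> \<le> 1" for \<mu>
    unfolding uu_def using int_H_comb[OF PH cvx r0 x0P y that] .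
  have Fu: "F (uu \<mu>) \<le> (1 - \<mu>) * m + \<mu> * F x0" if mu: "0 < \<mu>" "\<mu> < 1" for \<mu>
  proof -
    define v where "v = (\<lambda>k. (1 - \<mu>) *\<^sub>R xs (r k) + \<mu> *\<^sub>R x0)"
    have vP: "v k \<in> P" for k unfolding v_def using convexD_alt[OF cvx xs(1) x0P, of \<mu>] mu by simp
    have vlim: "v \<longlonglongrightarrow> uu \<mu>" unfolding v_def uu_def
      using lim by (auto intro!: tendsto_intros simp: o_def)
    have "(\<lambda>k. F (v k)) \<longlonglongrightarrow> F (uu \<mu>)"
      by (rule continuous_within_tendsto_compose[OF Fcont[OF uint] _ vlim]) (use mu vP in auto)
    moreover have "(\<lambda>k. (1 - \<mu>) * F (xs (r k)) + \<mu> * F x0) \<longlonglongrightarrow> (1 - \<mu>) * m + \<mu> * F x0"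
      by (intro tendsto_intros Flim)
    moreover have "F (v k) \<le> (1 - \<mu>) * F (xs (r k)) + \<mu> * F x0" for k
      unfolding v_def using convex_onD[OF Fc, of \<mu> "xs (r k)" x0] mu xs(1) x0P by simp
    ultimately show ?thesis by (intro LIMSEQ_le) auto
  qed
  show ?thesis
  proof (cases "y \<in> int_H P")
    case True
    have "F y \<le> m"
    proof (rule small_le[where K="F x0 - m - g y \<bullet> (x0 - y)"])
      fix \<mu> :: real assume mu: "0 < \<mu>" "\<mu> < 1"
      have uP: "uu \<mu> \<in> P" using uint[of \<mu>] mu intP by auto
      have d: "uu \<mu> - y = \<mu> *\<^sub>R (x0 - y)" unfolding uu_def by (simp add: algebra_simps)
      have "F y + \<mu> * (g y \<bullet> (x0 - y)) \<le> (1 - \<mu>) * m + \<mu> * F x0"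
        using tang[OF True uP] Fu[OF mu] unfolding d by simp
      then show "F y \<le> m + \<mu> * (F x0 - m - g y \<bullet> (x0 - y))" by (simp add: algebra_simps)
    qed
    then have "\<forall>\<omega>'\<in>P. F y \<le> F \<omega>'" using mle by (meson order_trans)
    then show ?thesis using y unfolding F_def by (intro bexI[of _ y])
  next
    case False
    then have yb: "y \<in> bdry_H P" using y cl by (simp add: bdry_H_def closure_closed)
    have yx0: "y \<noteq> x0" using False x0 by blast
    define \<rho> where "\<rho> = r0 / 2"
    have rho: "\<rho> > 0" using r0 by (simp add: \<rho>_def)
    define KS where "KS = cball x0 \<rho> \<inter> hyperP"
    have "(hyperP :: (real^'p) set) = {x. (\<chi> i. 1) \<bullet> x = (1::real)}"
      by (simp add: hyperP_def inner_vec_def)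
    then have clH: "closed (hyperP :: (real^'p) set)" using closed_hyperplane by metis
    have cK: "compact KS" unfolding KS_def using compact_Int_closed[OF compact_cball clH] .
    have KP: "KS \<subseteq> int_H P"
    proof
      fix z assume z: "z \<in> KS"
      have zH: "z \<in> hyperP" and dz: "dist x0 z \<le> \<rho>" using z by (auto simp: KS_def)
      have "z \<in> P" using r0 zH dz by (simp add: \<rho>_def dist_commute)
      moreover have "\<forall>v\<in>hyperP. dist v z < \<rho> \<longrightarrow> v \<in> P"
      proof (intro ballI impI)
        fix v assume "v \<in> hyperP" "dist v z < \<rho>"
        moreover have "dist v x0 \<le> dist v z + dist x0 z" by (rule dist_triangle2)
        ultimately show "v \<in> P" using r0 dz by (simp add: \<rho>_def)
      qed
      ultimately show "z \<in> int_H P" using rho unfolding int_H_def by blast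
    qed
    have "continuous_on KS F"
      unfolding continuous_on_eq_continuous_within
      using KP intP by (meson Fcont continuous_within_subset subsetD)
    moreover have x0K: "x0 \<in> KS" using x0P PH rho by (auto simp: KS_def)
    ultimately obtain zM where zM: "zM \<in> KS" "\<forall>z\<in>KS. F z \<le> F zM"
      using continuous_attains_sup[OF cK] by blast
    define M where "M = F zM"
    have Mm: "m \<le> M" using mle[OF x0P] zM(2) x0K by (auto simp: M_def)
    have bound: "norm (Phi (g (uu lam))) \<le> (M - m) / \<rho>" if lam: "0 < lam" "lam < 1" for lam
    proof -
      define u where "u = uu lam"
      define G where "G = g u"
      have uI: "u \<in> int_H P" unfolding u_def using uint lam by simp
      have Fum: "m \<le> F u" using mle uI intP by blast
      have Gd: "0 \<le> G \<bullet> (x0 - y)"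
      proof -
        have "- (G \<bullet> (x0 - y)) \<le> 0"
        proof (rule small_le[where K="F x0 - m - G \<bullet> (x0 - y)"])
          fix \<mu>' :: real assume mu': "0 < \<mu>'" "\<mu>' < 1"
          define \<mu> where "\<mu> = lam * \<mu>'"
          have "lam * \<mu>' \<le> lam * 1" using mu' lam by (intro mult_left_mono) auto
          then have "lam * \<mu>' < 1" using lam by linarith
          then have mu: "0 < \<mu>" "\<mu> < 1" using mu' lam by (auto simp: \<mu>_def)
          have uP: "uu \<mu> \<in> P" using uint[of \<mu>] mu intP by auto
          have d: "uu \<mu> - u = (\<mu> - lam) *\<^sub>R (x0 - y)" unfolding uu_def u_def by (simp add: algebra_simps)
          have "F u + (\<mu> - lam) * (G \<bullet> (x0 - y)) \<le> (1 - \<mu>) * m + \<mu> * F x0"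
            using tang[OF uI uP] Fu[OF mu] unfolding d G_def by simp
          then have "m + (\<mu> - lam) * (G \<bullet> (x0 - y)) \<le> (1 - \<mu>) * m + \<mu> * F x0" using Fum by linarith
          then have "lam * ((\<mu>' - 1) * (G \<bullet> (x0 - y))) \<le> lam * (\<mu>' * (F x0 - m))"
            by (simp add: \<mu>_def algebra_simps)
          then have "(\<mu>' - 1) * (G \<bullet> (x0 - y)) \<le> \<mu>' * (F x0 - m)"
            using lam by (simp add: mult_le_cancel_left_pos)
          then show "- (G \<bullet> (x0 - y)) \<le> 0 + \<mu>' * (F x0 - m - G \<bullet> (x0 - y))"
            by (simp add: algebra_simps)
        qed
        then show ?thesis by simp
      qed
      have Gw: "G \<bullet> w \<le> M - m" if w: "(\<Sum>p\<in>UNIV. w $ p) = 0" "norm w \<le> \<rho>" for w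
      proof -
        have "(\<Sum>p\<in>UNIV. x0 $ p) = 1" using x0P PH by (auto simp: hyperP_def)
        then have "(\<Sum>p\<in>UNIV. (x0 + w) $ p) = 1" using w unfolding sum_vec_add by simp
        then have "x0 + w \<in> KS" using w
          by (auto simp: KS_def hyperP_def dist_norm)
        then have xwP: "x0 + w \<in> P" and FM: "F (x0 + w) \<le> M" using KP intP zM by (auto simp: M_def)
        have d: "x0 + w - u = w + (1 - lam) *\<^sub>R (x0 - y)" unfolding u_def uu_def by (simp add: algebra_simps)
        have "F u + G \<bullet> w + (1 - lam) * (G \<bullet> (x0 - y)) \<le> F (x0 + w)"
          using tang[OF uI xwP] unfolding d G_def by (simp add: inner_add_right)
        moreover have "0 \<le> (1 - lam) * (G \<bullet> (x0 - y))" using Gd lam by simp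
        ultimately show ?thesis using FM Fum by linarith
      qed
      show ?thesis
      proof (cases "Phi G = 0")
        case True
        then show ?thesis using Mm rho by (simp add: G_def u_def)
      next
        case False
        define w where "w = (\<rho> / norm (Phi G)) *\<^sub>R Phi G"
        have "(\<Sum>p\<in>UNIV. w $ p) = 0" unfolding w_def sum_vec_scale Phi_sum by simp
        moreover have "norm w \<le> \<rho>" using False rho by (simp add: w_def)
        ultimately have "G \<bullet> w \<le> M - m" by (rule Gw)
        moreover have "G \<bullet> w = \<rho> * norm (Phi G)"
          using False by (simp add: w_def inner_Phi_self power2_eq_square)
        ultimately have "norm (Phi G) * \<rho> \<le> M - m" by (simp add: mult.commute)
        then show ?thesis using rho by (simp add: G_def u_def pos_le_divide_eq)
      qed
    qed
    define B where "B = (M - m) / \<rho> + norm (Phi cv)"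
    have "eventually (\<lambda>x. B < norm (Phi (gh x))) (at y within int_H P)"
      using hb[OF yb] unfolding filterlim_at_top_dense by blast
    then obtain d where d: "d > 0" "\<forall>x\<in>int_H P. x \<noteq> y \<and> dist x y < d \<longrightarrow> B < norm (Phi (gh x))"
      unfolding eventually_at by blast
    define lam where "lam = min (1/2) (d / (2 * dist x0 y))"
    have dpos: "dist x0 y > 0" using yx0 by simp
    have lam: "0 < lam" "lam < 1" using d dpos by (auto simp: lam_def)
    have ud: "uu lam - y = lam *\<^sub>R (x0 - y)" unfolding uu_def by (simp add: algebra_simps)
    have du: "dist (uu lam) y = lam * dist x0 y" using lam by (simp add: dist_norm ud)
    have "lam * dist x0 y \<le> d / (2 * dist x0 y) * dist x0 y"
      by (rule mult_right_mono) (auto simp: lam_def)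
    also have "\<dots> < d" using dpos d by (simp add: field_simps)
    finally have "dist (uu lam) y < d" using du by simp
    moreover have "uu lam \<noteq> y" using du lam dpos by auto
    moreover have "uu lam \<in> int_H P" using uint lam by simp
    ultimately have big: "B < norm (Phi (gh (uu lam)))" using d by blast
    have "Phi (gh (uu lam)) = Phi (g (uu lam)) - Phi cv"
      by (simp add: g_def Phi_add)
    then have "norm (Phi (gh (uu lam))) \<le> norm (Phi (g (uu lam))) + norm (Phi cv)"
      by (simp add: norm_triangle_ineq4)
    with bound[OF lam] big show ?thesis unfolding B_def by linarith
  qed
qed



lemma PiSet_simplex: "PiSet mu pth \<subseteq> simplexP"
  by (auto simp: PiSet_def)

lemma obj_inner:
  "(\<Sum>p\<in>UNIV. \<omega> $ p * (a p :: real)) = (\<chi> p. a p) \<bullet> (\<omega>::real^'p::finite)"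
  by (simp add: inner_vec_def mult.commute)

lemma BR_in:
  assumes ap: "admissible_perturbation mu pth Pih h"
  shows "best_response mu dmu pth Pih h f \<in> Pih"
proof -
  define a where "a = (\<lambda>p. \<Sum>e\<in>UNIV. Amat pth e p * delay mu dmu e (f $ e))"
  define cv where "cv = (\<chi> p. a p)"
  define obj where "obj = (\<lambda>\<omega>. (\<Sum>p\<in>UNIV. \<omega> $ p * (\<Sum>e\<in>UNIV. Amat pth e p * delay mu dmu e (f $ e))) + h \<omega>)"
  have objeq: "obj \<omega> = cv \<bullet> \<omega> + h \<omega>" for \<omega>
    unfolding obj_def cv_def a_def[symmetric] obj_inner ..
  from ap have sub: "Pih \<subseteq> PiSet mu pth" and cl: "closed Pih" and cvx: "convex Pih"
    and ne: "int_H Pih \<noteq> {}" and sc: "strictly_convex_on Pih h"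
    and ex: "\<exists>gh Hh. (\<forall>x\<in>int_H Pih.
          (h has_derivative (\<lambda>d. gh x \<bullet> d)) (at x within Pih) \<and>
          (gh has_derivative Hh x) (at x within Pih)) \<and>
        (\<forall>b\<in>bdry_H Pih. filterlim (\<lambda>x. norm (Phi (gh x))) at_top (at b within int_H Pih))"
    unfolding admissible_perturbation_def by blast+
  from ex obtain gh where
    hd: "\<And>x. x \<in> int_H Pih \<Longrightarrow> (h has_derivative (\<lambda>d. gh x \<bullet> d)) (at x within Pih)"
    and hb: "\<And>b. b \<in> bdry_H Pih \<Longrightarrow> filterlim (\<lambda>x. norm (Phi (gh x))) at_top (at b within int_H Pih)"
    by blast
  from ne obtain x0 where x0: "x0 \<in> int_H Pih" by blast
  have Psub: "Pih \<subseteq> simplexP" using sub PiSet_simplex by blast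
  obtain w where w: "w \<in> Pih" "\<forall>\<omega>'\<in>Pih. cv \<bullet> w + h w \<le> cv \<bullet> \<omega>' + h \<omega>'"
    using minimizer_exists[OF Psub cl cvx x0 strict_imp_convex_on[OF sc] hd hb, of cv] by blast
  have uniq: "\<omega> = w" if "\<omega> \<in> Pih" "\<forall>\<omega>'\<in>Pih. obj \<omega> \<le> obj \<omega>'" for \<omega>
  proof (rule ccontr)
    assume ne: "\<omega> \<noteq> w"
    define z where "z = (1 - 1/2) *\<^sub>R \<omega> + (1/2::real) *\<^sub>R w"
    have zP: "z \<in> Pih" unfolding z_def using convexD_alt[OF cvx that(1) w(1), of "1/2"] by simp
    have H: "\<And>x y t. x \<in> Pih \<Longrightarrow> y \<in> Pih \<Longrightarrow> x \<noteq> y \<Longrightarrow> 0 < t \<Longrightarrow> t < 1 \<Longrightarrow>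
        h ((1 - t) *\<^sub>R x + t *\<^sub>R y) < (1 - t) * h x + t * h y"
      using sc unfolding strictly_convex_on_def by blast
    have "h z < (1 - 1/2) * h \<omega> + (1/2) * h w"
      unfolding z_def by (rule H[OF that(1) w(1) ne]) simp_all
    moreover have "cv \<bullet> z = (1 - 1/2) * (cv \<bullet> \<omega>) + (1/2) * (cv \<bullet> w)"
      unfolding z_def by (simp add: inner_add_right)
    ultimately have "2 * obj z < obj \<omega> + obj w" unfolding objeq by (simp add: field_simps)
    moreover have "obj \<omega> \<le> obj w" "obj w \<le> obj z" "obj \<omega> \<le> obj z"
      using that w zP unfolding objeq by auto
    ultimately show False by linarith
  qed
  have "\<exists>!\<omega>. \<omega> \<in> Pih \<and> (\<forall>\<omega>'\<in>Pih. obj \<omega> \<le> obj \<omega>')"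
    using w uniq unfolding objeq by blast
  from this[THEN theI'] have "(THE \<omega>. \<omega> \<in> Pih \<and> (\<forall>\<omega>'\<in>Pih. obj \<omega> \<le> obj \<omega>')) \<in> Pih"
    by (rule conjunct1)
  then show ?thesis unfolding best_response_def obj_def Let_def .
qed



lemma fdD:
  assumes "flow_density mu dmu"
  shows "\<And>r. r \<ge> 0 \<Longrightarrow> (mu e has_real_derivative dmu e r) (at r within {0..})"
    and "continuous_on {0..} (dmu e)" and "strict_mono_on {0..} (mu e)"
    and "strictly_convex_on {0..} (\<lambda>r. - mu e r)" and "mu e 0 = 0"
  using assms unfolding flow_density_def by blast+

lemma mu_cont:
  assumes "flow_density mu dmu" shows "continuous_on {0..} (mu e)"
  unfolding continuous_on_eq_continuous_within
proof
  fix x :: real assume "x \<in> {0..}"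
  then show "continuous (at x within {0..}) (mu e)"
    using DERIV_continuous[OF fdD(1)[OF assms, of x]] by simp
qed

lemma dmu_pos:
  assumes fd: "flow_density mu dmu" and r: "r \<ge> 0"
  shows "dmu e r > 0"
proof -
  have cv: "convex_on {0..} (\<lambda>r. - mu e r)" using strict_imp_convex_on[OF fdD(4)[OF fd]] .
  have "((\<lambda>r. - mu e r) has_derivative (\<lambda>x. - (dmu e r * x))) (at r within {0..})"
    using has_derivative_minus[OF fdD(1)[OF fd r, unfolded has_field_derivative_def]] by simp
  from tangent_ineq[OF cv _ _ this, of "r + 1"] r
  have "- mu e r + - (dmu e r * (r + 1 - r)) \<le> - mu e (r + 1)" by simp
  moreover have "mu e r < mu e (r + 1)" using strict_mono_onD[OF fdD(3)[OF fd], of r "r+1"] r by simp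
  ultimately show ?thesis by simp
qed

lemma cap_lemma:
  assumes fd: "flow_density mu dmu" and y: "ereal y < capacity mu e"
  shows "\<exists>R\<ge>0. y < mu e R"
proof -
  define S where "S = (SUP r\<in>{0::real..}. ereal (mu e r))"
  have mono: "mu e a \<le> mu e b" if "0 \<le> a" "a \<le> b" for a b
    using strict_mono_on_leD[OF fdD(3)[OF fd], of a b] that by simp
  have "((\<lambda>r. ereal (mu e r)) \<longlongrightarrow> S) at_top"
  proof (rule order_tendstoI)
    fix a assume "a < S"
    then obtain r0 where r0: "r0 \<in> {0..}" "a < ereal (mu e r0)" unfolding S_def less_SUP_iff by blast
    show "eventually (\<lambda>r. a < ereal (mu e r)) at_top"
      using eventually_ge_at_top[of r0]
    proof (rule eventually_mono)
      fix r assume "r0 \<le> r"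
      then have "mu e r0 \<le> mu e r" using mono r0 by simp
      then have "ereal (mu e r0) \<le> ereal (mu e r)" by simp
      then show "a < ereal (mu e r)" using order_less_le_trans[OF r0(2)] by blast
    qed
  next
    fix a assume a: "S < a"
    show "eventually (\<lambda>r. ereal (mu e r) < a) at_top"
      using eventually_ge_at_top[of 0]
    proof (rule eventually_mono)
      fix r :: real assume "0 \<le> r"
      then have "ereal (mu e r) \<le> S" unfolding S_def by (intro SUP_upper) auto
      then show "ereal (mu e r) < a" using a by simp
    qed
  qed
  then have "capacity mu e = S" unfolding capacity_def
    by (rule tendsto_Lim[OF trivial_limit_at_top_linorder])
  with y have "ereal y < S" by simp
  then obtain r where "r \<in> {0..}" "ereal y < ereal (mu e r)" unfolding S_def less_SUP_iff by blast
  then have "0 \<le> r" "y < mu e r" by simp_all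
  then show ?thesis by blast
qed

lemma mu_inv_props:
  assumes fd: "flow_density mu dmu" and y: "0 \<le> y" "y \<le> mu e R" and R: "0 \<le> R"
  shows "0 \<le> mu_inv mu e y \<and> mu_inv mu e y \<le> R \<and> mu e (mu_inv mu e y) = y"
proof -
  have c: "continuous_on {0..R} (mu e)" using mu_cont[OF fd] by (rule continuous_on_subset) auto
  have "mu e 0 \<le> y" using fdD(5)[OF fd] y by simp
  from IVT'[OF this y(2) R c] obtain x where x: "0 \<le> x" "x \<le> R" "mu e x = y" by blast
  have sm: "strict_mono_on {0..} (mu e)" using fdD(3)[OF fd] .
  have uniq: "r = x" if "0 \<le> r" "mu e r = y" for r
  proof (rule ccontr)
    assume "r \<noteq> x"
    have "\<not> r < x" using strict_mono_onD[OF sm, of r x] that x by auto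
    moreover have "\<not> x < r" using strict_mono_onD[OF sm, of x r] that x by auto
    ultimately show False using \<open>r \<noteq> x\<close> by linarith
  qed
  have "mu_inv mu e y = x" unfolding mu_inv_def
  proof (rule the_equality)
    show "0 \<le> x \<and> mu e x = y" using x by simp
    show "\<And>r. 0 \<le> r \<and> mu e r = y \<Longrightarrow> r = x" using uniq by blast
  qed
  then show ?thesis using x by simp
qed

lemma gronwall:
  fixes \<phi> b :: "real \<Rightarrow> real"
  assumes d: "\<And>t. t \<ge> 0 \<Longrightarrow> (\<phi> has_real_derivative \<eta> * (b t - \<phi> t)) (at t within {0..})"
    and bm: "\<And>t. t \<ge> 0 \<Longrightarrow> b t \<le> mm" and eta: "\<eta> > 0" and t: "t \<ge> 0"
  shows "\<phi> t \<le> mm + exp (- (\<eta> * t)) * (\<phi> 0 - mm)"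
proof -
  define \<psi> where "\<psi> = (\<lambda>s. exp (\<eta> * s) * (\<phi> s - mm))"
  have d\<psi>: "(\<psi> has_real_derivative exp (\<eta> * s) * \<eta> * (b s - mm)) (at s within {0..})" if s: "s \<ge> 0" for s
  proof -
    have e: "((\<lambda>s. exp (\<eta> * s)) has_real_derivative exp (\<eta> * s) * \<eta>) (at s within {0..})"
      by (auto intro!: derivative_eq_intros)
    have p: "((\<lambda>s. \<phi> s - mm) has_real_derivative \<eta> * (b s - \<phi> s) - 0) (at s within {0..})"
      by (intro DERIV_diff d s DERIV_const)
    show ?thesis unfolding \<psi>_def
      by (rule DERIV_cong[OF DERIV_mult[OF e p]]) (simp add: algebra_simps)
  qed
  have "\<psi> t \<le> \<psi> 0"
  proof (rule DERIV_nonpos_imp_decreasing_open[OF t])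
    fix x assume x: "0 < x" "x < t"
    have "at x within {0..} = at x" by (rule at_within_interior) (use x in simp)
    then have "DERIV \<psi> x :> exp (\<eta> * x) * \<eta> * (b x - mm)" using d\<psi>[of x] x by simp
    moreover have "exp (\<eta> * x) * \<eta> * (b x - mm) \<le> 0"
      using bm[of x] x eta by (simp add: mult_nonneg_nonpos)
    ultimately show "\<exists>y. DERIV \<psi> x :> y \<and> y \<le> 0" by blast
  next
    show "continuous_on {0..t} \<psi>"
      unfolding continuous_on_eq_continuous_within
    proof
      fix x assume "x \<in> {0..t}"
      then have "continuous (at x within {0..}) \<psi>" using DERIV_continuous[OF d\<psi>] by simp
      then show "continuous (at x within {0..t}) \<psi>" by (rule continuous_within_subset) auto
    qed
  qed
  then have "exp (\<eta> * t) * (\<phi> t - mm) \<le> \<phi> 0 - mm" by (simp add: \<psi>_def)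
  then have "exp (- (\<eta> * t)) * (exp (\<eta> * t) * (\<phi> t - mm)) \<le> exp (- (\<eta> * t)) * (\<phi> 0 - mm)"
    by (rule mult_left_mono) simp
  moreover have "exp (- (\<eta> * t)) * exp (\<eta> * t) = 1" by (metis add.left_inverse exp_add exp_zero)
  ultimately have "\<phi> t - mm \<le> exp (- (\<eta> * t)) * (\<phi> 0 - mm)" by (simp add: mult.assoc[symmetric])
  then show ?thesis by simp
qed

lemma fpi_inner: "fpi pth x $ e = (\<chi> p. Amat pth e p) \<bullet> x"
  by (simp add: fpi_def inner_vec_def)

lemma fpi_deriv:
  assumes "(\<pi> has_vector_derivative D) (at t within S)"
  shows "((\<lambda>t. fpi pth (\<pi> t) $ e) has_real_derivative fpi pth D $ e) (at t within S)"
proof -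
  define c where "c = (\<chi> p. Amat pth e p)"
  have "((\<lambda>t. c \<bullet> \<pi> t) has_derivative (\<lambda>x. c \<bullet> (x *\<^sub>R D))) (at t within S)"
    using has_derivative_inner_right[OF assms[unfolded has_vector_derivative_def]] .
  moreover have "(\<lambda>x. c \<bullet> (x *\<^sub>R D)) = (*) (c \<bullet> D)" by (auto simp: fun_eq_iff)
  ultimately show ?thesis unfolding has_field_derivative_def fpi_inner c_def by simp
qed

lemma fpi_simplex:
  assumes "x \<in> simplexP"
  shows "0 \<le> fpi pth x $ e \<and> fpi pth x $ e \<le> 1"
proof -
  have nn: "\<And>p. 0 \<le> x $ p" and s: "(\<Sum>p\<in>UNIV. x $ p) = 1" using assms by (auto simp: simplexP_def)
  have A: "0 \<le> Amat pth e p \<and> Amat pth e p \<le> 1" for p by (simp add: Amat_def)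
  have "0 \<le> (\<Sum>p\<in>UNIV. Amat pth e p * x $ p)" using A nn by (intro sum_nonneg) simp
  moreover have "(\<Sum>p\<in>UNIV. Amat pth e p * x $ p) \<le> (\<Sum>p\<in>UNIV. x $ p)"
    using A nn by (intro sum_mono) (simp add: mult_left_le_one_le)
  ultimately show ?thesis using s by (simp add: fpi_def)
qed



lemma abs_inner_simplex:
  assumes g: "\<And>p. \<bar>g $ p\<bar> \<le> L" and x: "x \<in> simplexP"
  shows "\<bar>g \<bullet> (x::real^'p::finite)\<bar> \<le> L"
proof -
  have nn: "\<And>p. 0 \<le> x $ p" and s: "(\<Sum>p\<in>UNIV. x $ p) = 1" using x by (auto simp: simplexP_def)
  have "\<bar>g \<bullet> x\<bar> = \<bar>\<Sum>p\<in>UNIV. g $ p * x $ p\<bar>" by (simp add: inner_vec_def)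
  also have "\<dots> \<le> (\<Sum>p\<in>UNIV. \<bar>g $ p * x $ p\<bar>)" by (rule sum_abs)
  also have "\<dots> \<le> (\<Sum>p\<in>UNIV. L * x $ p)"
  proof (rule sum_mono)
    fix p
    have "\<bar>g $ p * x $ p\<bar> = \<bar>g $ p\<bar> * x $ p" using nn[of p] by (simp add: abs_mult)
    also have "\<dots> \<le> L * x $ p" using g[of p] nn[of p] by (rule mult_right_mono)
    finally show "\<bar>g $ p * x $ p\<bar> \<le> L * x $ p" .
  qed
  also have "\<dots> = L" using s by (simp add: sum_distrib_left[symmetric])
  finally show ?thesis .
qed

lemma term_bound:
  fixes x A d dm :: real
  assumes A: "0 \<le> A" "A \<le> 1" and d: "dm \<le> d" "0 < dm"
  shows "\<bar>sgn x * A / d\<bar> \<le> 1 / dm"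
proof -
  have s: "\<bar>sgn x\<bar> \<le> 1" by (cases x "0::real" rule: linorder_cases) auto
  have "\<bar>sgn x * A\<bar> \<le> 1" using s A by (simp add: abs_mult mult_le_one)
  then have "\<bar>sgn x * A\<bar> / d \<le> 1 / d" using d by (intro divide_right_mono) auto
  also have "1 / d \<le> 1 / dm" using d by (intro divide_left_mono) auto
  finally show ?thesis using d by (simp add: abs_divide)
qed

theorem lemma6:
  fixes src dst :: "'e::finite \<Rightarrow> nat" and n :: nat
    and pth :: "'p::finite \<Rightarrow> 'e list"
    and mu dmu :: "'e \<Rightarrow> real \<Rightarrow> real"
    and G :: "nat \<Rightarrow> real^'e \<Rightarrow> real^'p \<Rightarrow> real^'e"
    and Pih :: "(real^'p) set" and h :: "real^'p \<Rightarrow> real"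
    and \<alpha> :: real
  assumes "network src dst n"
    and "path_indexing src dst n pth"
    and "flow_density mu dmu"
    and "min_cut_gt_one mu src dst n"
    and "local_decisions mu pth src n G"
    and "admissible_perturbation mu pth Pih h"
    and "0 < \<alpha>" and "\<alpha> < 1"
  shows "\<exists>l>0. \<forall>\<eta>>0. \<exists>t0\<ge>0. \<forall>\<pi> \<rho>.
           admissible_init mu pth (\<pi> 0) (\<rho> 0) \<longrightarrow>
           is_solution mu dmu pth src dst G Pih h \<eta> \<pi> \<rho> \<longrightarrow>
           (\<forall>t\<ge>t0. Phi (gradW mu dmu pth src n \<alpha> (\<rho> t) (\<pi> t)) \<bullet>
                      (best_response mu dmu pth Pih h (mu_vec mu (\<rho> t)) - \<pi> t)
                    \<le> 2 * l / (1 - \<alpha>))"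
proof -
  note fd = assms(3) and ap = assms(6)
  from ap have sub: "Pih \<subseteq> PiSet mu pth" and cl: "closed Pih" and ne: "int_H Pih \<noteq> {}"
    unfolding admissible_perturbation_def by blast+
  have Psub: "Pih \<subseteq> simplexP" using sub PiSet_simplex by blast
  have Pne: "Pih \<noteq> {}" using ne by (auto simp: int_H_def)
  have "bounded Pih" using Psub simplex_norm by (auto simp: bounded_iff)
  then have cP: "compact Pih" using cl by (simp add: compact_eq_bounded_closed)
  have "\<exists>w\<in>Pih. \<forall>w'\<in>Pih. fpi pth w' $ e \<le> fpi pth w $ e" for e
  proof -
    have "continuous_on Pih (\<lambda>x. (\<chi> p. Amat pth e p) \<bullet> x)"
      by (intro continuous_on_inner continuous_on_const continuous_on_id)
    then show ?thesis using continuous_attains_sup[OF cP Pne] unfolding fpi_inner by blast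
  qed
  then obtain wm where wm: "\<And>e. wm e \<in> Pih" "\<And>e w'. w' \<in> Pih \<Longrightarrow> fpi pth w' $ e \<le> fpi pth (wm e) $ e"
    by metis
  define me where "me = (\<lambda>e. fpi pth (wm e) $ e)"
  have me_cap: "ereal (me e) < capacity mu e" for e
    using wm(1)[of e] sub by (auto simp: me_def PiSet_def)
  define D where "D = (\<lambda>e. if capacity mu e = \<infinity> then max 1 (me e) else real_of_ereal (capacity mu e))"
  define B where "B = (\<lambda>e. (me e + D e) / 2)"
  have meD: "me e \<le> D e" and B_cap: "ereal (B e) < capacity mu e"
    and phiD: "\<And>x. x \<in> PiSet mu pth \<Longrightarrow> fpi pth x $ e \<le> D e" for e
  proof -
    have "me e \<le> D e \<and> ereal (B e) < capacity mu e \<and> (\<forall>x\<in>PiSet mu pth. fpi pth x $ e \<le> D e)"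
    proof (cases "capacity mu e")
      case (real c)
      have "me e < c" using me_cap[of e] real by simp
      moreover have "\<forall>x\<in>PiSet mu pth. fpi pth x $ e \<le> c"
      proof
        fix x assume "x \<in> PiSet mu pth"
        then have "ereal (fpi pth x $ e) < capacity mu e" by (simp add: PiSet_def)
        then show "fpi pth x $ e \<le> c" using real by simp
      qed
      ultimately show ?thesis using real by (simp add: D_def B_def)
    next
      case PInf
      have "\<forall>x\<in>PiSet mu pth. fpi pth x $ e \<le> 1"
        using fpi_simplex PiSet_simplex by blast
      then show ?thesis using PInf by (auto simp: D_def B_def)
    next
      case MInf
      then show ?thesis using me_cap[of e] by simp
    qed
    then show "me e \<le> D e" "ereal (B e) < capacity mu e" "\<And>x. x \<in> PiSet mu pth \<Longrightarrow> fpi pth x $ e \<le> D e"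
      by blast+
  qed
  have "\<exists>R\<ge>0. B e < mu e R" for e using cap_lemma[OF fd B_cap] .
  then obtain R where R: "\<And>e. 0 \<le> R e" "\<And>e. B e < mu e (R e)" by metis
  have "\<exists>x\<in>{0..R e}. \<forall>y\<in>{0..R e}. dmu e x \<le> dmu e y" for e
  proof -
    have "continuous_on {0..R e} (dmu e)"
      using fdD(2)[OF fd] by (rule continuous_on_subset) auto
    then show ?thesis using continuous_attains_inf[of "{0..R e}" "dmu e"] R(1)[of e] by auto
  qed
  then obtain xm where xm: "\<And>e. xm e \<in> {0..R e}" "\<And>e y. y \<in> {0..R e} \<Longrightarrow> dmu e (xm e) \<le> dmu e y"
    by metis
  define dmin where "dmin = (\<lambda>e. dmu e (xm e))"
  have dmin_pos: "dmin e > 0" for e using dmu_pos[OF fd] xm(1)[of e] by (simp add: dmin_def)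
  define Ksum where "Ksum = (\<Sum>e\<in>UNIV. 1 / dmin e)"
  have Ks: "0 \<le> Ksum" unfolding Ksum_def using dmin_pos by (intro sum_nonneg) (simp add: less_imp_le)
  define L where "L = real n * Ksum"
  have L0: "0 \<le> L" using Ks by (simp add: L_def)
  show ?thesis
  proof (rule exI[of _ "L + 1"], intro conjI allI impI)
    show "0 < L + 1" using L0 by simp
    fix \<eta> :: real assume eta: "0 < \<eta>"
    show "\<exists>t0\<ge>0. \<forall>\<pi> \<rho>. admissible_init mu pth (\<pi> 0) (\<rho> 0) \<longrightarrow>
           is_solution mu dmu pth src dst G Pih h \<eta> \<pi> \<rho> \<longrightarrow>
           (\<forall>t\<ge>t0. Phi (gradW mu dmu pth src n \<alpha> (\<rho> t) (\<pi> t)) \<bullet>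
                      (best_response mu dmu pth Pih h (mu_vec mu (\<rho> t)) - \<pi> t)
                    \<le> 2 * (L + 1) / (1 - \<alpha>))"
    proof (rule exI[of _ "ln 2 / \<eta>"], intro conjI allI impI)
      show "0 \<le> ln 2 / \<eta>" using eta by simp
      fix \<pi> \<rho> and t :: real
      assume init: "admissible_init mu pth (\<pi> 0) (\<rho> 0)"
        and sol: "is_solution mu dmu pth src dst G Pih h \<eta> \<pi> \<rho>"
        and tt: "ln 2 / \<eta> \<le> t"
      define BR where "BR = (\<lambda>s. best_response mu dmu pth Pih h (mu_vec mu (\<rho> s)))"
      have ln2: "0 < ln (2::real)" by simp
      have t0: "0 \<le> t" using tt eta ln2 by (meson divide_nonneg_pos less_imp_le order_trans)
      have solP: "\<And>s. 0 \<le> s \<Longrightarrow> \<pi> s \<in> PiSet mu pth" using sol unfolding is_solution_def by blast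
      have solD: "\<And>s. 0 \<le> s \<Longrightarrow> (\<pi> has_vector_derivative \<eta> *\<^sub>R (BR s - \<pi> s)) (at s within {0..})"
        using sol unfolding is_solution_def BR_def by blast
      have BRin: "\<And>s. BR s \<in> Pih" unfolding BR_def using BR_in[OF ap] by blast
      have etat: "ln 2 \<le> \<eta> * t" using tt eta by (simp add: pos_divide_le_eq mult.commute)
      have ex_half: "exp (- (\<eta> * t)) \<le> 1 / 2"
      proof -
        have "exp (- (\<eta> * t)) \<le> exp (- ln 2)" using etat by simp
        also have "exp (- ln 2) = 1 / (2::real)" by (simp add: exp_minus)
        finally show ?thesis .
      qed
      have ex_pos: "0 < exp (- (\<eta> * t))" by simp
      have key: "dmin e \<le> dmu e (rho_pi mu pth (\<pi> t) e)" for e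
      proof -
        define \<phi> where "\<phi> = (\<lambda>s. fpi pth (\<pi> s) $ e)"
        have der: "(\<phi> has_real_derivative \<eta> * (fpi pth (BR s) $ e - \<phi> s)) (at s within {0..})"
          if s: "0 \<le> s" for s
        proof -
          have "(\<phi> has_real_derivative fpi pth (\<eta> *\<^sub>R (BR s - \<pi> s)) $ e) (at s within {0..})"
            unfolding \<phi>_def by (rule fpi_deriv[OF solD[OF s]])
          moreover have "fpi pth (\<eta> *\<^sub>R (BR s - \<pi> s)) $ e = \<eta> * (fpi pth (BR s) $ e - \<phi> s)"
            unfolding \<phi>_def fpi_inner by (simp add: inner_diff_right)
          ultimately show ?thesis by simp
        qed
        have gr: "\<phi> t \<le> me e + exp (- (\<eta> * t)) * (\<phi> 0 - me e)"
          by (rule gronwall[OF der _ eta t0]) (use wm BRin in \<open>auto simp: me_def\<close>)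
        have p0: "\<phi> 0 \<le> D e" unfolding \<phi>_def using phiD init by (simp add: admissible_init_def)
        have "\<phi> t \<le> B e"
        proof (cases "\<phi> 0 \<le> me e")
          case True
          then have "exp (- (\<eta> * t)) * (\<phi> 0 - me e) \<le> 0" using ex_pos by (simp add: mult_nonneg_nonpos)
          then show ?thesis using gr meD[of e] by (simp add: B_def)
        next
          case False
          then have "exp (- (\<eta> * t)) * (\<phi> 0 - me e) \<le> (1/2) * (\<phi> 0 - me e)"
            using ex_half by (intro mult_right_mono) auto
          also have "\<dots> \<le> (1/2) * (D e - me e)" using p0 by simp
          finally show ?thesis using gr by (simp add: B_def field_simps)
        qed
        moreover have "0 \<le> \<phi> t" unfolding \<phi>_def using fpi_simplex PiSet_simplex solP[OF t0] by blast
        ultimately have mi: "0 \<le> mu_inv mu e (\<phi> t) \<and> mu_inv mu e (\<phi> t) \<le> R e"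
          using mu_inv_props[OF fd _ _ R(1)[of e]] R(2)[of e] by (meson less_imp_le order_trans)
        then have "dmu e (xm e) \<le> dmu e (mu_inv mu e (\<phi> t))" using xm(2) by auto
        then show ?thesis by (simp add: dmin_def rho_pi_def \<phi>_def)
      qed
      define gw where "gw = gradW mu dmu pth src n \<alpha> (\<rho> t) (\<pi> t)"
      have gwb: "\<bar>gw $ p\<bar> \<le> L" for p
      proof -
        define T where "T = (\<lambda>e. sgn (\<rho> t $ e - rho_pi mu pth (\<pi> t) e) * Amat pth e p / dmu e (rho_pi mu pth (\<pi> t) e))"
        have Tb: "\<bar>T e\<bar> \<le> 1 / dmin e" for e
          unfolding T_def by (rule term_bound) (use key[of e] dmin_pos[of e] in \<open>auto simp: Amat_def\<close>)
        have Sb: "\<bar>\<alpha> ^ v * (\<Sum>e\<in>{e. src e = v}. T e)\<bar> \<le> Ksum" for v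
        proof -
          have "\<bar>\<Sum>e\<in>{e. src e = v}. T e\<bar> \<le> (\<Sum>e\<in>{e. src e = v}. \<bar>T e\<bar>)" by (rule sum_abs)
          also have "\<dots> \<le> (\<Sum>e\<in>{e. src e = v}. 1 / dmin e)" using Tb by (rule sum_mono)
          also have "\<dots> \<le> Ksum" unfolding Ksum_def
            using dmin_pos by (intro sum_mono2) (auto simp: less_imp_le)
          finally have S: "\<bar>\<Sum>e\<in>{e. src e = v}. T e\<bar> \<le> Ksum" .
          have a: "0 \<le> \<alpha> ^ v" "\<alpha> ^ v \<le> 1" using assms(7,8) by (auto simp: power_le_one)
          have "\<bar>\<alpha> ^ v * (\<Sum>e\<in>{e. src e = v}. T e)\<bar> = \<alpha> ^ v * \<bar>\<Sum>e\<in>{e. src e = v}. T e\<bar>"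
            using a by (simp add: abs_mult)
          also have "\<dots> \<le> 1 * \<bar>\<Sum>e\<in>{e. src e = v}. T e\<bar>" using a by (intro mult_right_mono) auto
          finally show ?thesis using S by simp
        qed
        have "gw $ p = - (\<Sum>v<n. \<alpha> ^ v * (\<Sum>e\<in>{e. src e = v}. T e))"
          by (simp add: gw_def gradW_def T_def)
        then have "\<bar>gw $ p\<bar> = \<bar>\<Sum>v<n. \<alpha> ^ v * (\<Sum>e\<in>{e. src e = v}. T e)\<bar>" by simp
        also have "\<dots> \<le> (\<Sum>v<n. \<bar>\<alpha> ^ v * (\<Sum>e\<in>{e. src e = v}. T e)\<bar>)" by (rule sum_abs)
        also have "\<dots> \<le> (\<Sum>v<n. Ksum)" using Sb by (rule sum_mono)
        also have "\<dots> = L" by (simp add: L_def)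
        finally show ?thesis .
      qed
      have BRs: "BR t \<in> simplexP" using BRin Psub by blast
      have pis: "\<pi> t \<in> simplexP" using solP[OF t0] PiSet_simplex by blast
      have "(\<Sum>p\<in>UNIV. (BR t - \<pi> t) $ p) = 0"
        unfolding sum_vec_diff using simplex_sum[OF BRs] simplex_sum[OF pis] by simp
      then have "Phi gw \<bullet> (BR t - \<pi> t) = gw \<bullet> (BR t - \<pi> t)" by (rule inner_Phi_zero_sum)
      also have "\<dots> = gw \<bullet> BR t - gw \<bullet> \<pi> t" by (simp add: inner_diff_right)
      also have "\<dots> \<le> L + L"
        using abs_inner_simplex[OF gwb BRs] abs_inner_simplex[OF gwb pis] by linarith
      also have "\<dots> \<le> 2 * (L + 1)" by simp
      also have "\<dots> \<le> 2 * (L + 1) / (1 - \<alpha>)"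
      proof -
        have "2 * (L + 1) * (1 - \<alpha>) \<le> 2 * (L + 1)" using L0 assms(7,8)
          by (simp add: mult_left_le_one_le)
        then show ?thesis using assms(8) by (simp add: le_divide_eq)
      qed
      finally have fin: "Phi gw \<bullet> (BR t - \<pi> t) \<le> 2 * (L + 1) / (1 - \<alpha>)" .
      then show "Phi (gradW mu dmu pth src n \<alpha> (\<rho> t) (\<pi> t)) \<bullet>
                      (best_response mu dmu pth Pih h (mu_vec mu (\<rho> t)) - \<pi> t)
                    \<le> 2 * (L + 1) / (1 - \<alpha>)" by (simp only: gw_def BR_def)
    qed
  qed
qed


end
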